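(* Suppose $p_1,p_2,p_3\in V$ have Gram matrix $\begin{pmatrix}1&t_1&t\\ t_1&1&t_2\overline\lambda\\ t&t_2\lambda&1\end{pmatrix}$ (i.e. $\langle p_i,p_j\rangle$ is the $(i,j)$ entry), where $t,t_1,t_2>1$, $|\lambda|=1$, $\lambda\ne1$. Put $m_1:=\frac{p_1-p_2}{\sqrt{2(t_1-1)}}$ and $m_2:=\frac{\lambda p_2-p_3}{\sqrt{2(t_2-1)}}$. Then $$\mathrm{Re}\frac{\langle p_1,m_2\rangle\langle m_1,m_1\rangle}{\langle m_1,m_2\rangle\langle p_1,m_1\rangle}=1+\frac{t^2-tt_1+t_1^2-(t_2-1)^2+tt_1(1-2\mathrm{Re}\lambda)}{(t_1+t_2-1)^2+t^2-2t(t_1+t_2-1)\mathrm{Re}\lambda},$$ $$\mathrm{tr}\big(R(m_2)R(m_1)R(p_1)\big)=2t(\overline\lambda-1)+\frac{2tt_1-t-t_1+1-2t_2}{t_1-1}-\frac{t^2-tt_1+t_1^2-(t_2-1)^2+t(t_1+t_2-1)(1-2\mathrm{Re}\lambda)}{(t_1-1)(t_2-1)}.$$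
   Context: $V$ is a $3$-dimensional complex vector space with a hermitian form $\langle-,-\rangle$ (linear in the first argument) of signature $++-$. For nonisotropic $p\in V$, $R(p)$ is the linear map $x\mapsto 2\frac{\langle x,p\rangle}{\langle p,p\rangle}p-x$. *)

theory Defs
  imports "HOL-Analysis.Analysis"
begin

type_synonym cvec = "complex ^ 3"

definition hermitian_form :: "(cvec \<Rightarrow> cvec \<Rightarrow> complex) \<Rightarrow> bool" where
  "hermitian_form h \<longleftrightarrow>
     (\<forall>x y z. h (x + y) z = h x z + h y z) \<and>
     (\<forall>c x z. h (c *s x) z = c * h x z) \<and>
     (\<forall>x y. h y x = cnj (h x y))"

text \<open>Signature (++-): there is a basis e1,e2,e3 with Gram matrix diag(1,1,-1)
  (orthogonal expansion of every vector shows it spans, hence is a basis).\<close>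
definition signature_pp_m :: "(cvec \<Rightarrow> cvec \<Rightarrow> complex) \<Rightarrow> bool" where
  "signature_pp_m h \<longleftrightarrow>
     (\<exists>e :: 3 \<Rightarrow> cvec.
        (\<forall>i j. h (e i) (e j) = (if i = j then (if i = 3 then -1 else 1) else 0)) \<and>
        (\<forall>x. x = (\<Sum>i\<in>UNIV. (h x (e i) / h (e i) (e i)) *s e i)))"

definition R :: "(cvec \<Rightarrow> cvec \<Rightarrow> complex) \<Rightarrow> cvec \<Rightarrow> cvec \<Rightarrow> cvec" where
  "R h p x = (2 * h x p / h p p) *s p - x"

definition ctrace :: "(cvec \<Rightarrow> cvec) \<Rightarrow> complex" where
  "ctrace f = (\<Sum>i\<in>UNIV. f (axis i 1) $ i)"

end

theory Submission imports Defs begin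

context
  fixes h :: "cvec \<Rightarrow> cvec \<Rightarrow> complex"
  assumes H: "hermitian_form h"
begin

lemma hl_add: "h (x + y) z = h x z + h y z" using H unfolding hermitian_form_def by blast
lemma hl_smult: "h (c *s x) z = c * h x z" using H unfolding hermitian_form_def by blast
lemma h_sym: "h y x = cnj (h x y)" using H unfolding hermitian_form_def by blast
lemma hr_add: "h x (y + z) = h x y + h x z"
  by (metis h_sym hl_add complex_cnj_add complex_cnj_cnj)
lemma hr_smult: "h x (c *s y) = cnj c * h x y"
  by (metis h_sym hl_smult complex_cnj_mult complex_cnj_cnj)
lemma hl_zero: "h 0 z = 0"
  using hl_smult[of 0 0 z] by simp
lemma hr_zero: "h z 0 = 0"
  using hl_zero h_sym by (metis complex_cnj_zero)
lemma hl_neg: "h (- x) z = - h x z"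
  using hl_add[of x "-x" z] hl_zero by (metis neg_eq_iff_add_eq_0)
lemma hr_neg: "h z (- x) = - h z x"
  using hr_add[of z x "-x"] hr_zero by (metis neg_eq_iff_add_eq_0)
lemma hl_diff: "h (x - y) z = h x z - h y z"
  by (metis diff_conv_add_uminus hl_add hl_neg)
lemma hr_diff: "h z (x - y) = h z x - h z y"
  by (metis diff_conv_add_uminus hr_add hr_neg)

lemma hl_sum: "h (sum f S) z = (\<Sum>i\<in>S. h (f i) z)"
proof (induction S rule: infinite_finite_induct)
  case (infinite A) then show ?case using hl_zero by simp
next
  case empty then show ?case using hl_zero by simp
next
  case (insert x F) then show ?case by (simp add: hl_add)
qed

lemma key_tr: "(\<Sum>i\<in>UNIV. h (axis i 1) a * u $ i) = h u a"
proof -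
  have "h u a = h (\<Sum>i\<in>UNIV. (u$i) *s axis i 1) a" by (simp add: basis_expansion)
  also have "\<dots> = (\<Sum>i\<in>UNIV. h (axis i 1) a * u $ i)" by (simp add: hl_sum hl_smult mult.commute)
  finally show ?thesis by simp
qed

lemma TR: "ctrace (\<lambda>x. (h x a * c0 + h x b * c1 + h x c * c2) *s u + g x)
   = c0 * h u a + c1 * h u b + c2 * h u c + ctrace g"
proof -
  have "ctrace (\<lambda>x. (h x a * c0 + h x b * c1 + h x c * c2) *s u + g x)
    = (\<Sum>i\<in>UNIV. c0 * (h (axis i 1) a * u $ i) + c1 * (h (axis i 1) b * u $ i)
      + c2 * (h (axis i 1) c * u $ i) + g (axis i 1) $ i)"
    unfolding ctrace_def by (rule sum.cong) (simp_all add: algebra_simps)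
  also have "\<dots> = c0 * (\<Sum>i\<in>UNIV. h (axis i 1) a * u $ i) + c1 * (\<Sum>i\<in>UNIV. h (axis i 1) b * u $ i)
      + c2 * (\<Sum>i\<in>UNIV. h (axis i 1) c * u $ i) + ctrace g"
    unfolding ctrace_def by (simp add: sum.distrib sum_distrib_left)
  finally show ?thesis by (simp add: key_tr)
qed

lemma tr_neg: "ctrace (\<lambda>x. - x) = -3"
  unfolding ctrace_def by (simp add: sum_3 axis_def)

lemma R_scale: "c \<noteq> 0 \<Longrightarrow> R h (c *s p) = R h p"
  unfolding R_def fun_eq_iff by (simp add: hl_smult hr_smult vec_eq_iff field_simps)

lemma comp3:
  "R h q2 \<circ> R h q1 \<circ> R h q0 = (\<lambda>x.
     (h x q0 * (2 / h q2 q2 * (2 / h q1 q1 * h q1 q2 * (2 / h q0 q0) * h q0 q1 - 2 / h q0 q0 * h q0 q2))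
      + h x q1 * (- (2 / h q2 q2) * (2 / h q1 q1) * h q1 q2) + h x q2 * (2 / h q2 q2)) *s q2
   + ((h x q0 * (- (2 / h q1 q1) * (2 / h q0 q0) * h q0 q1) + h x q1 * (2 / h q1 q1) + h x q2 * 0) *s q1
   + ((h x q0 * (2 / h q0 q0) + h x q1 * 0 + h x q2 * 0) *s q0 + - x)))"
  unfolding R_def fun_eq_iff vec_eq_iff
  apply (intro allI)
  apply (simp add: hl_add hl_diff hl_smult divide_inverse)
  apply algebra
  done

lemma trace3:
  "ctrace (R h q2 \<circ> R h q1 \<circ> R h q0) =
     h q2 q0 * (2 / h q2 q2 * (2 / h q1 q1 * h q1 q2 * (2 / h q0 q0) * h q0 q1 - 2 / h q0 q0 * h q0 q2))
      + h q2 q1 * (- (2 / h q2 q2) * (2 / h q1 q1) * h q1 q2) + h q2 q2 * (2 / h q2 q2)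
   + (h q1 q0 * (- (2 / h q1 q1) * (2 / h q0 q0) * h q0 q1) + h q1 q1 * (2 / h q1 q1))
   + h q0 q0 * (2 / h q0 q0) - 3"
  unfolding comp3 TR tr_neg by (simp add: algebra_simps)
end

lemma fin_alg:
  fixes lam L t t1 t2 :: complex
  assumes l0: "lam \<noteq> 0" and a1: "t1 \<noteq> 1" and b1: "t2 \<noteq> 1" and LL: "L = 1 / lam"
  shows "(lam * t1 - t) * (2 / (2 - 2 * t2) * (2 / (2 - 2 * t1) * (L * (t1 + t2 - 1) - t) * (2 / 1) * (1 - t1) - 2 / 1 * (L * t1 - t)))
      + (lam * (t1 + t2 - 1) - t) * (- (2 / (2 - 2 * t2)) * (2 / (2 - 2 * t1)) * (L * (t1 + t2 - 1) - t)) + (2 - 2 * t2) * (2 / (2 - 2 * t2))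
   + ((1 - t1) * (- (2 / (2 - 2 * t1)) * (2 / 1) * (1 - t1)) + (2 - 2 * t1) * (2 / (2 - 2 * t1)))
   + 1 * (2 / 1) - 3 = 2 * t * (L - 1)
           + ((2*t*t1 - t - t1 + 1 - 2*t2) / (t1 - 1))
           - ((t^2 - t*t1 + t1^2 - (t2 - 1)^2 + t*(t1 + t2 - 1)*(1 - 2 * ((lam + L) / 2)))
                              / ((t1 - 1) * (t2 - 1)))"
proof -
  have u: "t1 - 1 \<noteq> 0" and v: "t2 - 1 \<noteq> 0" using a1 b1 by auto
  have e1: "2 - 2 * t1 = -2 * (t1 - 1)" and e2: "2 - 2 * t2 = -2 * (t2 - 1)" by simp_all
  have e3: "1 - t1 = - (t1 - 1)" by simp
  define u where "u = t1 - 1"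
  define v where "v = t2 - 1"
  have t1e: "t1 = u + 1" and t2e: "t2 = v + 1" unfolding u_def v_def by simp_all
  have "u \<noteq> 0" "v \<noteq> 0" using u v unfolding u_def v_def by auto
  then show ?thesis unfolding e1 e2 e3 unfolding u_def[symmetric] v_def[symmetric] LL t1e t2e
    using l0 apply (simp add: field_simps)
    apply algebra done
qed

theorem lemma4p4:
  fixes h :: "cvec \<Rightarrow> cvec \<Rightarrow> complex"
    and p1 p2 p3 m1 m2 :: cvec and t t1 t2 :: real and lam :: complex
  assumes "hermitian_form h" and "signature_pp_m h"
    and "h p1 p1 = 1" and "h p1 p2 = t1" and "h p1 p3 = t"
    and "h p2 p1 = t1" and "h p2 p2 = 1" and "h p2 p3 = t2 * cnj lam"
    and "h p3 p1 = t" and "h p3 p2 = t2 * lam" and "h p3 p3 = 1"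
    and "t > 1" and "t1 > 1" and "t2 > 1"
    and "cmod lam = 1" and "lam \<noteq> 1"
    and "m1 = (1 / complex_of_real (sqrt (2 * (t1 - 1)))) *s (p1 - p2)"
    and "m2 = (1 / complex_of_real (sqrt (2 * (t2 - 1)))) *s (lam *s p2 - p3)"
  shows "(Re ((h p1 m2 * h m1 m1) / (h m1 m2 * h p1 m1)) =
           1 + (t^2 - t*t1 + t1^2 - (t2 - 1)^2 + t*t1*(1 - 2 * Re lam)) /
               ((t1 + t2 - 1)^2 + t^2 - 2*t*(t1 + t2 - 1) * Re lam)) \<and>
         (ctrace (R h m2 \<circ> R h m1 \<circ> R h p1) =
           2 * t * (cnj lam - 1)
           + complex_of_real ((2*t*t1 - t - t1 + 1 - 2*t2) / (t1 - 1))
           - complex_of_real ((t^2 - t*t1 + t1^2 - (t2 - 1)^2 + t*(t1 + t2 - 1)*(1 - 2 * Re lam))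
                              / ((t1 - 1) * (t2 - 1))))"
proof -
  note H = assms(1)
  define q1 where "q1 = p1 - p2"
  define q2 where "q2 = lam *s p2 - p3"
  define L where "L = cnj lam"
  have lamL: "lam * L = 1"
    using assms(15) complex_norm_square[of lam] unfolding L_def by simp
  have lam0: "lam \<noteq> 0" using lamL by auto
  have L_eq: "L = 1 / lam" using lamL lam0 by (simp add: field_simps)
  have s1: "sqrt (2 * (t1 - 1)) > 0" using assms(13) by simp
  have s2: "sqrt (2 * (t2 - 1)) > 0" using assms(14) by simp
  define c1 where "c1 = 1 / complex_of_real (sqrt (2 * (t1 - 1)))"
  define c2 where "c2 = 1 / complex_of_real (sqrt (2 * (t2 - 1)))"
  have c1: "c1 \<noteq> 0" using s1 unfolding c1_def by simp
  have c2: "c2 \<noteq> 0" using s2 unfolding c2_def by simp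
  have m1: "m1 = c1 *s q1" using assms(17) unfolding c1_def q1_def by simp
  have m2: "m2 = c2 *s q2" using assms(18) unfolding c2_def q2_def by simp
  note hs = hl_add[OF H] hl_diff[OF H] hl_smult[OF H] hr_add[OF H] hr_diff[OF H] hr_smult[OF H]
  have G01: "h p1 q1 = 1 - t1" unfolding q1_def using assms by (simp add: hs)
  have G10: "h q1 p1 = 1 - t1" unfolding q1_def using assms by (simp add: hs)
  have G11: "h q1 q1 = 2 - 2 * t1" unfolding q1_def using assms by (simp add: hs)
  have G02: "h p1 q2 = L * t1 - t" unfolding q2_def L_def using assms by (simp add: hs)
  have G20: "h q2 p1 = lam * t1 - t" unfolding q2_def using assms by (simp add: hs)
  have G12: "h q1 q2 = L * (t1 + t2 - 1) - t" unfolding q1_def q2_def L_def using assms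
    by (simp add: hs algebra_simps)
  have G21: "h q2 q1 = lam * (t1 + t2 - 1) - t" unfolding q1_def q2_def using assms
    by (simp add: hs algebra_simps)
  have G22: "h q2 q2 = 2 - 2 * t2" unfolding q2_def using assms lamL
    by (simp add: hs algebra_simps L_def)
  have t1n: "complex_of_real t1 \<noteq> 1" using assms(13) by (metis less_irrefl of_real_eq_1_iff)
  have t2n: "complex_of_real t2 \<noteq> 1" using assms(14) by (metis less_irrefl of_real_eq_1_iff)
  have t1n': "2 - 2 * complex_of_real t1 \<noteq> 0" using t1n by auto
  have t2n': "2 - 2 * complex_of_real t2 \<noteq> 0" using t2n by auto
  have ReL: "complex_of_real (Re lam) = (lam + L) / 2"
    using complex_add_cnj[of lam] unfolding L_def by simp
  have "ctrace (R h m2 \<circ> R h m1 \<circ> R h p1) = ctrace (R h q2 \<circ> R h q1 \<circ> R h p1)"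
    by (simp add: m1 m2 R_scale[OF H] c1 c2)
  also have "\<dots> = 
     (lam * t1 - t) * (2 / (2 - 2 * t2) * (2 / (2 - 2 * t1) * (L * (t1 + t2 - 1) - t) * (2 / 1) * (1 - t1) - 2 / 1 * (L * t1 - t)))
      + (lam * (t1 + t2 - 1) - t) * (- (2 / (2 - 2 * t2)) * (2 / (2 - 2 * t1)) * (L * (t1 + t2 - 1) - t)) + (2 - 2 * t2) * (2 / (2 - 2 * t2))
   + ((1 - t1) * (- (2 / (2 - 2 * t1)) * (2 / 1) * (1 - t1)) + (2 - 2 * t1) * (2 / (2 - 2 * t1)))
   + 1 * (2 / 1) - 3"
    unfolding trace3[OF H] G01 G10 G11 G02 G20 G12 G21 G22 assms(3)
    by (simp only: of_real_diff of_real_add of_real_mult of_real_divide of_real_minus of_real_numeral of_real_1)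
  also have "\<dots> = 2 * t * (cnj lam - 1)
           + complex_of_real ((2*t*t1 - t - t1 + 1 - 2*t2) / (t1 - 1))
           - complex_of_real ((t^2 - t*t1 + t1^2 - (t2 - 1)^2 + t*(t1 + t2 - 1)*(1 - 2 * Re lam))
                              / ((t1 - 1) * (t2 - 1)))"
    unfolding L_def[symmetric] of_real_divide of_real_mult of_real_diff of_real_add of_real_power
      of_real_1 of_real_numeral ReL of_real_minus
    by (rule fin_alg[OF lam0 t1n t2n L_eq])
  finally have P2: "ctrace (R h m2 \<circ> R h m1 \<circ> R h p1) = 2 * t * (cnj lam - 1)
           + complex_of_real ((2*t*t1 - t - t1 + 1 - 2*t2) / (t1 - 1))
           - complex_of_real ((t^2 - t*t1 + t1^2 - (t2 - 1)^2 + t*(t1 + t2 - 1)*(1 - 2 * Re lam))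
                              / ((t1 - 1) * (t2 - 1)))" .
  obtain a b where ab: "lam = Complex a b" by (cases lam) auto
  have a2b2: "a^2 + b^2 = 1" using assms(15) unfolding ab cmod_def by simp
  have Lab: "L = Complex a (-b)" unfolding L_def ab by (simp add: complex_eq_iff)
  have Rl: "Re lam = a" unfolding ab by simp
  define T where "T = t1 + t2 - 1"
  have T1: "T > 1" unfolding T_def using assms(13,14) by simp
  define D where "D = T^2 + t^2 - 2*t*T*a"
  have Deq: "D = (T - t*a)^2 + (t*b)^2" unfolding D_def using a2b2 by algebra
  have Dne: "D \<noteq> 0"
  proof
    assume "D = 0"
    then have "(T - t*a)^2 = 0" "(t*b)^2 = 0" unfolding Deq
      by (smt (verit) zero_le_power2)+
    then have e1: "T = t*a" and "b = 0" using assms(12) by auto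
    then have "a^2 = 1" using a2b2 by simp
    then have "a = 1 \<or> a = -1" by (simp add: power2_eq_1_iff)
    then show False
    proof
      assume "a = 1" then show False using \<open>b = 0\<close> ab assms(16) by (simp add: one_complex.code)
    next
      assume "a = -1" then show False using e1 T1 assms(12) by simp
    qed
  qed
  have cc1: "cnj c1 \<noteq> 0" and cc2: "cnj c2 \<noteq> 0" using c1 c2 by auto
  have G12ne: "h q1 q2 \<noteq> 0"
  proof
    assume "h q1 q2 = 0"
    then have "L * T - t = 0" unfolding G12 T_def by simp
    then have "Re (L*T - t) = 0" "Im (L * T - t) = 0" by simp_all
    then have "a * T - t = 0" "b * T = 0" unfolding Lab by simp_all
    moreover have "D = (a * T - t)^2 + (b * T)^2" unfolding D_def using a2b2 by algebra
    ultimately have "D = 0" by simp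
    then show False using Dne by simp
  qed
  have ratio: "h p1 m2 * h m1 m1 / (h m1 m2 * h p1 m1) = 2 * h p1 q2 / h q1 q2"
  proof -
    have "h p1 m2 * h m1 m1 / (h m1 m2 * h p1 m1)
        = (cnj c2 * c1 * cnj c1 * (1 - t1)) * (2 * h p1 q2) / ((cnj c2 * c1 * cnj c1 * (1 - t1)) * h q1 q2)"
      unfolding m1 m2 hl_smult[OF H] hr_smult[OF H] G11 G01 by (simp add: algebra_simps)
    also have "\<dots> = 2 * h p1 q2 / h q1 q2"
      using c1 cc1 cc2 t1n by (subst mult_divide_mult_cancel_left) auto
    finally show ?thesis .
  qed
  have P1: "Re ((h p1 m2 * h m1 m1) / (h m1 m2 * h p1 m1)) =
           1 + (t^2 - t*t1 + t1^2 - (t2 - 1)^2 + t*t1*(1 - 2 * Re lam)) /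
               ((t1 + t2 - 1)^2 + t^2 - 2*t*(t1 + t2 - 1) * Re lam)"
  proof -
    have "Re ((h p1 m2 * h m1 m1) / (h m1 m2 * h p1 m1))
       = ((2*a*t1 - 2*t) * (a*T - t) + (-2*b*t1) * (-b*T)) / ((a*T - t)^2 + (-b*T)^2)"
      unfolding ratio G02 G12 Re_divide T_def[symmetric] Lab by simp
    also have "(a*T - t)^2 + (-b*T)^2 = D" unfolding D_def using a2b2 by algebra
    also have "((2*a*t1 - 2*t) * (a*T - t) + (-2*b*t1) * (-b*T)) = D + (t^2 - t*t1 + t1^2 - (t2 - 1)^2 + t*t1*(1 - 2 * a))"
      unfolding D_def T_def using a2b2 by algebra
    also have "(D + (t^2 - t*t1 + t1^2 - (t2 - 1)^2 + t*t1*(1 - 2 * a))) / D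
       = 1 + (t^2 - t*t1 + t1^2 - (t2 - 1)^2 + t*t1*(1 - 2 * a)) / D"
      using Dne by (simp add: add_divide_distrib)
    finally show ?thesis unfolding Rl D_def T_def .
  qed
  show ?thesis using P1 P2 by simp
qed

end
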